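(* Assume the setting of the context with $g$ logconcave. Then: (a) The coverage satisfies $C(\theta)=G(x_1(\theta))$ for $\theta\in[0,a]$; $C(\theta)=G(x_1(\theta))-G(x_0(\theta))$ for $\theta\in(a,2d_0]$; $C(\theta)=G(x_1(\theta))-G(x_2(\theta))$ for $\theta\in(2d_0,\infty)$, and the functions $x_0,x_1,x_2$ satisfy (i) $G(x_0(\theta))=\alpha\,G(x_0(\theta)+\theta)$ for $\theta\in(a,2d_0]$; (ii) $2G(x_1(\theta))-1=(1-\alpha)G(x_1(\theta)+\theta)$ for $\theta\ge0$; (iii) $1-2G(x_2(\theta))=(1-\alpha)G(x_2(\theta)+\theta)$ for $\theta\ge 2d_0$. (b) $x_0$ and $x_1$ are nondecreasing and $x_2$ is nonincreasing on their domains; $x_0(2d_0)=x_2(2d_0)=-d_0$; $x_0(d_1)=-d_1$ whenever $d_1>a$; $\lim_{\theta\to0^+}x_1(\theta)=d_0$, $\lim_{\theta\to\infty}x_1(\theta)=d_1$, and $\lim_{\theta\to\infty}x_2(\theta)=-d_1$.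
   Context: Let $g$ be a probability density on $\mathbb{R}$, unimodal and symmetric about $0$ (i.e. $g(z)=g(-z)$ and $g$ nonincreasing on $[0,\infty)$), and logconcave ($\log g$ concave on its support), with cdf $G$ and quantile function $G^{-1}(t)=\inf\{x:G(x)\ge t\}$. Let $X$ have density $g(x-\theta)$, $\theta\ge0$, and $P_\theta$ the corresponding probability. Fix $\alpha\in(0,1)$, and set $d_0=G^{-1}(\tfrac1{1+\alpha})$, $d_1=G^{-1}(1-\tfrac\alpha2)$. The HPD credible interval (prior $1_{[0,\infty)}(\theta)$, credibility $1-\alpha$) is $[l(X),u(X)]$ with $l(x)=\{x-G^{-1}(\tfrac12+\tfrac{1-\alpha}2G(x))\}1_{(d_0,\infty)}(x)$, $u(x)=x-G^{-1}(\alpha G(x))$ for $x\le d_0$ and $u(x)=x+G^{-1}(\tfrac12+\tfrac{1-\alpha}2G(x))$ for $x>d_0$. The frequentist coverage is $C(\theta)=P_\theta(l(X)\le\theta\le u(X))$, and $a=\lim_{x\to-\infty}u(x)$. Define $u^{-1}(\theta)=\inf\{x:\theta\le u(x)\}$, $l^{-1}(\theta)=\sup\{x:\theta\ge l(x)\}$, and $x_0(\theta)=u^{-1}(\theta)-\theta$ for $\theta\in(a,2d_0]$, $x_1(\theta)=l^{-1}(\theta)-\theta$ for $\theta\ge0$, $x_2(\theta)=u^{-1}(\theta)-\theta$ for $\theta\ge2d_0$. *)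

theory Defs
  imports "HOL-Analysis.Analysis"
begin

definition cdf :: "(real \<Rightarrow> real) \<Rightarrow> real \<Rightarrow> real" where
  "cdf g x = (LINT t:{..x}|lborel. g t)"

definition qf :: "(real \<Rightarrow> real) \<Rightarrow> real \<Rightarrow> real" where
  "qf g t = Inf {x. t \<le> cdf g x}"

definition d0 :: "(real \<Rightarrow> real) \<Rightarrow> real \<Rightarrow> real" where
  "d0 g \<alpha> = qf g (1 / (1 + \<alpha>))"

definition d1 :: "(real \<Rightarrow> real) \<Rightarrow> real \<Rightarrow> real" where
  "d1 g \<alpha> = qf g (1 - \<alpha> / 2)"

definition lo :: "(real \<Rightarrow> real) \<Rightarrow> real \<Rightarrow> real \<Rightarrow> real" where
  "lo g \<alpha> x = (if d0 g \<alpha> < x then x - qf g (1/2 + (1 - \<alpha>) / 2 * cdf g x) else 0)"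

definition up :: "(real \<Rightarrow> real) \<Rightarrow> real \<Rightarrow> real \<Rightarrow> real" where
  "up g \<alpha> x = (if x \<le> d0 g \<alpha> then x - qf g (\<alpha> * cdf g x)
                 else x + qf g (1/2 + (1 - \<alpha>) / 2 * cdf g x))"

definition coverage :: "(real \<Rightarrow> real) \<Rightarrow> real \<Rightarrow> real \<Rightarrow> real" where
  "coverage g \<alpha> \<theta> = measure (density lborel (\<lambda>x. ennreal (g (x - \<theta>))))
       {x. lo g \<alpha> x \<le> \<theta> \<and> \<theta> \<le> up g \<alpha> x}"

definition up_inv :: "(real \<Rightarrow> real) \<Rightarrow> real \<Rightarrow> real \<Rightarrow> real" where
  "up_inv g \<alpha> \<theta> = Inf {x. \<theta> \<le> up g \<alpha> x}"

definition lo_inv :: "(real \<Rightarrow> real) \<Rightarrow> real \<Rightarrow> real \<Rightarrow> real" where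
  "lo_inv g \<alpha> \<theta> = Sup {x. \<theta> \<ge> lo g \<alpha> x}"

definition xx0 :: "(real \<Rightarrow> real) \<Rightarrow> real \<Rightarrow> real \<Rightarrow> real" where
  "xx0 g \<alpha> \<theta> = up_inv g \<alpha> \<theta> - \<theta>"

definition xx1 :: "(real \<Rightarrow> real) \<Rightarrow> real \<Rightarrow> real \<Rightarrow> real" where
  "xx1 g \<alpha> \<theta> = lo_inv g \<alpha> \<theta> - \<theta>"

definition xx2 :: "(real \<Rightarrow> real) \<Rightarrow> real \<Rightarrow> real \<Rightarrow> real" where
  "xx2 g \<alpha> \<theta> = up_inv g \<alpha> \<theta> - \<theta>"

end

theory Submission
  imports Defs
begin

lemma cont_nbhd_lt:
  fixes f :: "real \<Rightarrow> real"
  assumes "isCont f r" "f r < c"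
  shows "\<exists>d>0. \<forall>y. \<bar>y - r\<bar> < d \<longrightarrow> f y < c"
proof -
  have "eventually (\<lambda>y. f y < c) (at r)"
    using assms unfolding isCont_def by (rule order_tendstoD)
  then obtain d where d: "d > 0" "\<And>y. y \<noteq> r \<Longrightarrow> dist y r < d \<Longrightarrow> f y < c"
    unfolding eventually_at by auto
  have "\<forall>y. \<bar>y - r\<bar> < d \<longrightarrow> f y < c"
  proof (intro allI impI)
    fix y assume "\<bar>y - r\<bar> < d"
    then show "f y < c" using d assms(2) by (cases "y = r") (auto simp: dist_real_def)
  qed
  then show ?thesis using d(1) by blast
qed

lemma cont_lt_right:
  fixes f :: "real \<Rightarrow> real"
  assumes "isCont f r" "f r < c" shows "\<exists>y>r. f y < c"
proof -
  obtain d where "d > 0" "\<forall>y. \<bar>y - r\<bar> < d \<longrightarrow> f y < c" using cont_nbhd_lt[OF assms] by auto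
  then show ?thesis by (intro exI[of _ "r + d/2"]) auto
qed

lemma cont_lt_left:
  fixes f :: "real \<Rightarrow> real"
  assumes "isCont f r" "f r < c" shows "\<exists>y<r. f y < c"
proof -
  obtain d where "d > 0" "\<forall>y. \<bar>y - r\<bar> < d \<longrightarrow> f y < c" using cont_nbhd_lt[OF assms] by auto
  then show ?thesis by (intro exI[of _ "r - d/2"]) auto
qed

locale L0 =
  fixes g :: "real \<Rightarrow> real" and \<alpha> :: real
  assumes meas: "g \<in> borel_measurable borel"
    and nonneg: "\<And>x. 0 \<le> g x"
    and integ: "integrable lborel g"
    and total: "(LINT x|lborel. g x) = 1"
    and symm: "\<And>z. g (- z) = g z"
    and unimodal: "\<And>x y. 0 \<le> x \<Longrightarrow> x \<le> y \<Longrightarrow> g y \<le> g x"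
    and logconc: "\<And>x y t. 0 < g x \<Longrightarrow> 0 < g y \<Longrightarrow> 0 \<le> t \<Longrightarrow> t \<le> 1 \<Longrightarrow>
                    t * ln (g x) + (1 - t) * ln (g y) \<le> ln (g (t * x + (1 - t) * y))"
    and alpha: "0 < \<alpha>" "\<alpha> < 1"
    and pos: "\<And>x. 0 < g x"
begin

lemma meas'[measurable]: "g \<in> borel_measurable borel" by (rule meas)

lemma g_cont: "continuous_on UNIV g"
proof -
  have "convex_on UNIV (\<lambda>x. - ln (g x))"
  proof (rule convex_onI)
    fix t x y :: real assume t: "t > 0" "t < 1"
    have "(1-t) * ln (g x) + (1 - (1-t)) * ln (g y) \<le> ln (g ((1-t) * x + (1 - (1-t)) * y))"
      using t by (intro logconc pos) auto
    then show "- ln (g ((1 - t) *\<^sub>R x + t *\<^sub>R y)) \<le> (1 - t) * - ln (g x) + t * - ln (g y)"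
      by simp
  qed auto
  then have "continuous_on UNIV (\<lambda>x. - ln (g x))"
    by (intro convex_on_continuous) auto
  then have "continuous_on UNIV (\<lambda>x. - (- ln (g x)))" by (rule continuous_on_minus)
  then have "continuous_on UNIV (\<lambda>x. exp (- (- ln (g x))))"
    by (rule continuous_on_exp)
  moreover have "(\<lambda>x. exp (- (- ln (g x)))) = g" using pos by (simp add: fun_eq_iff)
  ultimately show ?thesis by metis
qed

lemma g_isCont: "isCont g x"
  using g_cont by (simp add: continuous_on_eq_continuous_at)

lemma seti: "S \<in> sets borel \<Longrightarrow> set_integrable lborel S g"
  unfolding set_integrable_def by (intro integrable_mult_indicator integ) auto

lemma G_diff: assumes "a \<le> b" shows "cdf g b - cdf g a = integral {a..b} g"
proof -
  have "{..b} = {..a} \<union> {a<..b}" using assms by auto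
  then have "cdf g b = cdf g a + (LINT t:{a<..b}|lborel. g t)"
    unfolding cdf_def by (simp only:) (rule set_integral_Un; auto intro: seti)
  moreover have "(LINT t:{a<..b}|lborel. g t) = integral {a<..b} g"
    by (intro set_borel_integral_eq_integral seti) auto
  moreover have "integral {a<..b} g = integral {a..b} g"
  proof -
    have "negligible {a}" by simp
    have "integral {a<..b} g = integral {a<..<b} g"
      by (rule integral_spike_set) (auto intro: negligible_subset[of "{b}"])
    then show ?thesis by (simp add: integral_open_interval_real)
  qed
  ultimately show ?thesis by linarith
qed

lemma G_deriv: "(cdf g has_real_derivative g x) (at x)"
proof -
  have c: "continuous_on {x-1..x+1} g" using g_cont continuous_on_subset by blast
  have d: "((\<lambda>y. integral {x-1..y} g) has_real_derivative g x) (at x within {x-1..x+1})"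
    by (rule integral_has_real_derivative[OF c]) auto
  have d2: "((\<lambda>y. cdf g (x-1) + integral {x-1..y} g) has_real_derivative g x) (at x)"
  proof -
    have "((\<lambda>y. integral {x-1..y} g) has_real_derivative g x) (at x)"
      using d by (subst (asm) at_within_interior[of x]) auto
    from DERIV_add[OF DERIV_const this] show ?thesis by simp
  qed
  show ?thesis
  proof (rule has_field_derivative_transform_within_open[OF d2, of "{x-1<..<x+1}"])
    fix y assume "y \<in> {x-1<..<x+1}"
    then show "cdf g (x - 1) + integral {x - 1..y} g = cdf g y" using G_diff[of "x-1" y] by auto
  qed auto
qed

lemma G_isCont: "isCont (cdf g) x"
  using G_deriv DERIV_isCont by blast

lemma G_cont_on: "continuous_on S (cdf g)"
  using G_isCont continuous_at_imp_continuous_on by blast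

lemma G_strict: "x < y \<Longrightarrow> cdf g x < cdf g y"
  by (rule DERIV_pos_imp_increasing) (use G_deriv pos in blast)+

lemma G_mono: "x \<le> y \<Longrightarrow> cdf g x \<le> cdf g y"
  using G_strict[of x y] by (cases "x = y") auto

lemma G_less_iff: "cdf g x < cdf g y \<longleftrightarrow> x < y"
  using G_strict G_mono by (meson not_le)

lemma G_le_iff: "cdf g x \<le> cdf g y \<longleftrightarrow> x \<le> y"
  using G_strict G_mono by (meson not_le)

lemma G_eq_iff: "cdf g x = cdf g y \<longleftrightarrow> x = y"
  using G_le_iff[of x y] G_le_iff[of y x] by auto

lemma G_top: "(cdf g \<longlongrightarrow> 1) at_top"
proof -
  have "((\<lambda>y. \<integral> x. indicator {.. y} x *\<^sub>R g x \<partial>lborel) \<longlongrightarrow> \<integral> x. g x \<partial>lborel) at_top"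
    by (rule tendsto_integral_at_top) (auto simp: integ)
  then show ?thesis using total unfolding cdf_def set_lebesgue_integral_def by (simp add: fun_eq_iff)
qed

lemma G_sym: "cdf g (- x) = 1 - cdf g x"
proof -
  have "cdf g (- x) = (LINT t:{x..}|lborel. g t)"
    unfolding cdf_def by (subst set_integral_reflect) (simp add: symm atLeast_def)
  also have "\<dots> = (LINT t:{x<..}|lborel. g t)"
  proof (rule set_integral_cong_set)
    show "AE t in lborel. (t \<in> {x<..}) = (t \<in> {x..})"
      using AE_lborel_singleton[of x] by eventually_elim auto
  qed (unfold set_borel_measurable_def, measurable)
  finally have 1: "cdf g (- x) = (LINT t:{x<..}|lborel. g t)" .
  have "(LINT t:UNIV|lborel. g t) = (LINT t:{..x}|lborel. g t) + (LINT t:{x<..}|lborel. g t)"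
  proof -
    have e: "{..x} \<union> {x<..} = UNIV" by auto
    have d: "{..x} \<inter> {x<..} = {}" by auto
    show ?thesis using d set_integral_Un[of "{..x}" "{x<..}" lborel g] seti[of "{..x}"] seti[of "{x<..}"] e by auto
  qed
  moreover have "(LINT t:UNIV|lborel. g t) = 1" using total unfolding set_lebesgue_integral_def by simp
  ultimately show ?thesis using 1 unfolding cdf_def by linarith
qed

lemma G_half: "cdf g 0 = 1/2"
  using G_sym[of 0] by simp

lemma G_bot: "(cdf g \<longlongrightarrow> 0) at_bot"
proof -
  have "((\<lambda>x. 1 - cdf g (- x)) \<longlongrightarrow> 1 - 1) at_bot"
    by (intro tendsto_diff tendsto_const filterlim_compose[OF G_top] filterlim_uminus_at_top_at_bot)
  then show ?thesis by (simp add: G_sym)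
qed

lemma G_nonneg: "0 \<le> cdf g x"
  unfolding cdf_def set_lebesgue_integral_def
  by (rule Bochner_Integration.integral_nonneg) (auto simp: nonneg split: split_indicator)

lemma G_pos: "0 < cdf g x"
  using G_nonneg[of "x-1"] G_strict[of "x-1" x] by simp

lemma G_less1: "cdf g x < 1"
  using G_pos[of "-x"] G_sym[of x] by simp

lemma G_surj: assumes "0 < t" "t < 1" shows "\<exists>y. cdf g y = t"
proof -
  have "eventually (\<lambda>y. cdf g y < t) at_bot"
    using G_bot assms(1) by (rule order_tendstoD)
  then obtain a where a: "cdf g a < t" by (auto simp: eventually_at_bot_linorder)
  have "eventually (\<lambda>y. t < cdf g y) at_top"
    using G_top assms(2) by (rule order_tendstoD)
  then obtain b where b: "t < cdf g b" by (auto simp: eventually_at_top_linorder)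
  have "a \<le> b" using a b G_le_iff[of b a] by linarith
  from IVT'[of "cdf g" a t b, OF _ _ this G_cont_on] a b show ?thesis by auto
qed

lemma qf_G: "qf g (cdf g x) = x"
proof -
  have "{y. cdf g x \<le> cdf g y} = {x..}" by (auto simp: G_le_iff)
  then show ?thesis unfolding qf_def by simp
qed

lemma G_qf: assumes "0 < t" "t < 1" shows "cdf g (qf g t) = t"
  using G_surj[OF assms] qf_G by metis

lemma qf_le_iff: assumes "0 < t" "t < 1" shows "qf g t \<le> y \<longleftrightarrow> t \<le> cdf g y"
  using G_le_iff[of "qf g t" y] G_qf[OF assms] by simp

lemma le_qf_iff: assumes "0 < t" "t < 1" shows "y \<le> qf g t \<longleftrightarrow> cdf g y \<le> t"
  using G_le_iff[of y "qf g t"] G_qf[OF assms] by simp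

lemma qf_less_iff: assumes "0 < t" "t < 1" shows "qf g t < y \<longleftrightarrow> t < cdf g y"
  using le_qf_iff[OF assms, of y] by auto

lemma qf_eq_iff: assumes "0 < t" "t < 1" shows "qf g t = y \<longleftrightarrow> t = cdf g y"
  using G_qf[OF assms] qf_G by metis

lemma qf_mono: assumes "0 < s" "s \<le> t" "t < 1" shows "qf g s \<le> qf g t"
  using qf_le_iff[of s "qf g t"] G_qf[of t] assms by simp

abbreviation "D0 \<equiv> d0 g \<alpha>"
abbreviation "D1 \<equiv> d1 g \<alpha>"

lemma GD0: "cdf g D0 = 1 / (1 + \<alpha>)"
  unfolding d0_def using alpha by (intro G_qf) (auto simp: field_simps)

lemma GD1: "cdf g D1 = 1 - \<alpha> / 2"
  unfolding d1_def using alpha by (intro G_qf) auto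

lemma GmD0: "cdf g (- D0) = \<alpha> / (1 + \<alpha>)"
proof -
  have "1 - 1 / (1 + \<alpha>) = \<alpha> / (1 + \<alpha>)" using alpha by (simp add: field_simps)
  then show ?thesis using GD0 G_sym[of D0] by simp
qed

lemma GmD1: "cdf g (- D1) = \<alpha> / 2"
  using GD1 G_sym[of D1] by simp

lemma D0_pos: "0 < D0"
proof -
  have "1/2 < 1 / (1 + \<alpha>)" using alpha by (simp add: field_simps)
  then have "cdf g 0 < cdf g D0" using GD0 G_half by simp
  then show ?thesis by (simp add: G_less_iff)
qed

lemma D0_less_D1: "D0 < D1"
proof -
  have "1 / (1 + \<alpha>) < 1 - \<alpha> / 2" using alpha by (simp add: field_simps)
  then have "cdf g D0 < cdf g D1" using GD0 GD1 by simp
  then show ?thesis by (simp add: G_less_iff)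
qed

lemma LC0:
  assumes "p \<le> q" "q \<le> w" "p \<le> q'" "q' \<le> w" "q + q' = p + w"
  shows "g p * g w \<le> g q * g q'"
proof (cases "p = w")
  case True
  then have "q = p" "q' = p" using assms by auto
  then show ?thesis using True by simp
next
  case False
  then have pw: "p < w" using assms by simp
  define l where "l = (w - q) / (w - p)"
  have l0: "0 \<le> l" "l \<le> 1" using assms pw by (auto simp: l_def field_simps)
  have lw: "l * (w - p) = w - q" using pw by (simp add: l_def)
  have q: "q = l * p + (1 - l) * w" using lw by (simp add: algebra_simps)
  have q': "q' = (1 - l) * p + (1 - (1 - l)) * w" using lw assms(5) by (simp add: algebra_simps)
  have 1: "l * ln (g p) + (1 - l) * ln (g w) \<le> ln (g q)"
    using logconc[OF pos pos l0] q by simp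
  have 2: "(1 - l) * ln (g p) + (1 - (1 - l)) * ln (g w) \<le> ln (g q')"
    using logconc[OF pos pos, of "1 - l"] l0 q' by simp
  have "ln (g p * g w) \<le> ln (g q * g q')"
    using 1 2 ln_mult_pos[OF pos[of p] pos[of w]] ln_mult_pos[OF pos[of q] pos[of q']] by (simp add: algebra_simps)
  then show ?thesis using pos by (simp add: mult_pos_pos)
qed

lemma LC1: assumes "0 \<le> \<theta>" "s \<le> t" shows "g (s - \<theta>) * g t \<le> g (t - \<theta>) * g s"
  using LC0[of "s - \<theta>" s t "t - \<theta>"] assms by (simp add: mult.commute)

lemma G_deriv_shift: "((\<lambda>z. cdf g (z - \<theta>)) has_real_derivative g (z - \<theta>)) (at z)"
proof -
  have "((\<lambda>z. z - \<theta>) has_real_derivative 1) (at z)" by (auto intro!: derivative_eq_intros)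
  from DERIV_chain2[OF G_deriv[of "z - \<theta>"] this] show ?thesis by simp
qed

lemma shift_bot: "filterlim (\<lambda>z::real. z - c) at_bot at_bot"
  unfolding filterlim_at_bot eventually_at_bot_linorder
proof
  fix Z show "\<exists>N. \<forall>n\<le>N. n - c \<le> Z" by (rule exI[of _ "Z + c"]) auto
qed

lemma shift_top: "filterlim (\<lambda>z::real. z + c) at_top at_top"
  unfolding filterlim_at_top eventually_at_top_linorder
proof
  fix Z show "\<exists>N. \<forall>n\<ge>N. Z \<le> n + c" by (rule exI[of _ "Z - c"]) auto
qed

lemma G_shift_bot: "((\<lambda>z. cdf g (z - \<theta>)) \<longlongrightarrow> 0) at_bot"
  by (rule filterlim_compose[OF G_bot shift_bot])

lemma G_shift_top: "((\<lambda>z. cdf g (z + \<theta>)) \<longlongrightarrow> 1) at_top"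
  by (rule filterlim_compose[OF G_top shift_top])

lemma LC3: assumes "0 \<le> \<theta>" shows "g y * cdf g (y - \<theta>) \<le> g (y - \<theta>) * cdf g y"
proof -
  define K where "K z = g y * cdf g (z - \<theta>) - g (y - \<theta>) * cdf g z" for z
  have dK: "(K has_real_derivative (g y * g (z - \<theta>) - g (y - \<theta>) * g z)) (at z)" for z
    unfolding K_def by (intro DERIV_diff DERIV_cmult G_deriv_shift G_deriv)
  have "K y \<le> K z" if "z \<le> y" for z
  proof (rule DERIV_nonpos_imp_nonincreasing[OF that])
    fix x assume "z \<le> x" "x \<le> y"
    then show "\<exists>d. (K has_real_derivative d) (at x) \<and> d \<le> 0"
      using dK LC1[OF assms \<open>x \<le> y\<close>] by (intro exI[of _ "g y * g (x - \<theta>) - g (y - \<theta>) * g x"]) (auto simp: mult.commute)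
  qed
  moreover have "(K \<longlongrightarrow> g y * 0 - g (y - \<theta>) * 0) at_bot"
    unfolding K_def by (intro tendsto_intros G_shift_bot G_bot)
  ultimately have "K y \<le> 0"
    using tendsto_lowerbound[of K 0 at_bot "K y"] by (auto simp: eventually_at_bot_linorder)
  then show ?thesis by (simp add: K_def)
qed

lemma LC2: assumes "0 \<le> \<theta>" "x \<le> y" shows "cdf g (x - \<theta>) * cdf g y \<le> cdf g (y - \<theta>) * cdf g x"
proof -
  define R where "R z = cdf g (z - \<theta>) / cdf g z" for z
  have dR: "(R has_real_derivative ((g (z - \<theta>) * cdf g z - cdf g (z - \<theta>) * g z) / (cdf g z * cdf g z))) (at z)" for z
    unfolding R_def using G_pos[of z] by (intro DERIV_divide G_deriv_shift G_deriv) auto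
  have "R x \<le> R y"
  proof (rule DERIV_nonneg_imp_nondecreasing[OF assms(2)])
    fix z
    have "0 \<le> (g (z - \<theta>) * cdf g z - cdf g (z - \<theta>) * g z) / (cdf g z * cdf g z)"
      using LC3[OF assms(1), of z] by (intro divide_nonneg_nonneg) (auto simp: mult.commute)
    then show "\<exists>d. (R has_real_derivative d) (at z) \<and> 0 \<le> d" using dR by blast
  qed
  then show ?thesis using G_pos[of x] G_pos[of y] by (simp add: R_def field_simps)
qed

abbreviation S where "S x \<equiv> 1/2 + (1 - \<alpha>) / 2 * cdf g x"

lemma S_gt: "1/2 < S x" using G_pos[of x] alpha by simp
lemma S_lt: "S x < 1 - \<alpha>/2"
proof -
  have "(1 - \<alpha>) / 2 * cdf g x < (1 - \<alpha>) / 2 * 1" using G_less1[of x] alpha by (intro mult_strict_left_mono) auto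
  then show ?thesis by simp
qed
lemma S_lt1: "S x < 1" using S_lt[of x] alpha by simp
lemma S_mono: "x \<le> y \<Longrightarrow> S x \<le> S y" using G_mono[of x y] alpha by (simp add: mult_left_mono)
lemma S_D0: "S D0 = cdf g D0"
  using alpha by (simp add: GD0 field_simps)

lemma aG_pos: "0 < \<alpha> * cdf g x" using alpha G_pos by simp
lemma aG_lt1: "\<alpha> * cdf g x < 1"
proof -
  have "\<alpha> * cdf g x < 1 * 1" using alpha G_less1[of x] G_pos[of x] by (intro mult_strict_mono) auto
  then show ?thesis by simp
qed

lemma up_le: "x \<le> D0 \<Longrightarrow> up g \<alpha> x = x - qf g (\<alpha> * cdf g x)" by (simp add: up_def)
lemma up_gt: "D0 < x \<Longrightarrow> up g \<alpha> x = x + qf g (S x)" by (simp add: up_def)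
lemma lo_le: "x \<le> D0 \<Longrightarrow> lo g \<alpha> x = 0" by (simp add: lo_def)
lemma lo_gt: "D0 < x \<Longrightarrow> lo g \<alpha> x = x - qf g (S x)" by (simp add: lo_def)

lemma U1: "x \<le> D0 \<Longrightarrow> \<theta> \<le> up g \<alpha> x \<longleftrightarrow> \<alpha> * cdf g x \<le> cdf g (x - \<theta>)"
  using qf_le_iff[OF aG_pos aG_lt1, of x "x - \<theta>"] up_le by auto

lemma up_D0: "up g \<alpha> D0 = 2 * D0"
proof -
  have "\<alpha> * cdf g D0 = cdf g (- D0)" using GD0 GmD0 by simp
  then show ?thesis using up_le[of D0] qf_G by simp
qed

lemma U2: "D0 \<le> x \<Longrightarrow> \<theta> \<le> up g \<alpha> x \<longleftrightarrow> cdf g (\<theta> - x) \<le> S x"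
proof (cases "x = D0")
  case True
  then show ?thesis using up_D0 S_D0 G_le_iff[of "\<theta> - D0" D0] by auto
next
  case False
  assume "D0 \<le> x" then have "D0 < x" using False by simp
  then show ?thesis using le_qf_iff[of "S x" "\<theta> - x"] S_gt[of x] S_lt1[of x] up_gt by auto
qed

lemma L2: "D0 < x \<Longrightarrow> lo g \<alpha> x \<le> \<theta> \<longleftrightarrow> cdf g (x - \<theta>) \<le> S x"
  using le_qf_iff[of "S x" "x - \<theta>"] S_gt[of x] S_lt1[of x] lo_gt by auto

lemma qfS_pos: "0 \<le> qf g (S x)"
  using le_qf_iff[of "S x" 0] S_gt[of x] S_lt1[of x] G_half by auto

lemma up_pos: "0 < up g \<alpha> x"
proof (cases "x \<le> D0")
  case True
  have "\<not> x \<le> qf g (\<alpha> * cdf g x)"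
    using le_qf_iff[OF aG_pos aG_lt1, of x x] G_pos[of x] alpha by auto
  then show ?thesis using up_le[OF True] by simp
next
  case False
  then show ?thesis using up_gt[of x] qfS_pos[of x] D0_pos by simp
qed

lemma up_ge_x: "D0 < x \<Longrightarrow> x \<le> up g \<alpha> x"
  using up_gt qfS_pos by simp

lemma up_mono_le: assumes "x \<le> y" "y \<le> D0" shows "up g \<alpha> x \<le> up g \<alpha> y"
proof -
  define t where "t = up g \<alpha> x"
  have t0: "0 \<le> t" using up_pos[of x] by (simp add: t_def)
  have "\<alpha> * cdf g x \<le> cdf g (x - t)" using U1[of x t] assms by (simp add: t_def)
  then have "\<alpha> * cdf g x * cdf g y \<le> cdf g (x - t) * cdf g y" using G_pos[of y] by (simp add: mult_right_mono)
  also have "\<dots> \<le> cdf g (y - t) * cdf g x" by (rule LC2[OF t0 assms(1)])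
  finally have "\<alpha> * cdf g y \<le> cdf g (y - t)" using G_pos[of x] by (simp add: mult.commute mult.left_commute)
  then show ?thesis using U1[of y t] assms by (simp add: t_def)
qed

lemma up_ge_2D0: "D0 \<le> x \<Longrightarrow> 2 * D0 \<le> up g \<alpha> x"
proof -
  assume x: "D0 \<le> x"
  have "cdf g (2 * D0 - x) \<le> cdf g D0" using x by (simp add: G_le_iff)
  also have "\<dots> \<le> S x" using S_mono[OF x] S_D0 by simp
  finally show ?thesis using U2[OF x] by simp
qed

lemma up_mono: assumes "x \<le> y" shows "up g \<alpha> x \<le> up g \<alpha> y"
proof (cases "y \<le> D0")
  case True then show ?thesis using up_mono_le assms by simp
next
  case False
  show ?thesis
  proof (cases "x \<le> D0")
    case True
    then have "up g \<alpha> x \<le> 2 * D0" using up_mono_le[OF True order_refl] up_D0 by simp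
    also have "\<dots> \<le> up g \<alpha> y" using False up_ge_2D0 by simp
    finally show ?thesis .
  next
    case F2: False
    define t where "t = up g \<alpha> x"
    have "cdf g (t - x) \<le> S x" using U2[of x t] F2 by (simp add: t_def)
    moreover have "cdf g (t - y) \<le> cdf g (t - x)" using assms by (simp add: G_le_iff)
    moreover have "S x \<le> S y" using S_mono assms by simp
    ultimately have "cdf g (t - y) \<le> S y" by linarith
    then show ?thesis using U2[of y t] False by (simp add: t_def)
  qed
qed

lemma G_comp_isCont: "isCont f x \<Longrightarrow> isCont (\<lambda>x. cdf g (f x)) x"
  by (rule isCont_o2[OF _ G_isCont])

lemma g_shift_ge: assumes "0 \<le> \<theta>" "\<theta> \<le> 2 * z" shows "g z \<le> g (z - \<theta>)"
proof (cases "0 \<le> z - \<theta>")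
  case True then show ?thesis using unimodal[of "z - \<theta>" z] assms by simp
next
  case False
  then have "g z \<le> g (\<theta> - z)" using unimodal[of "\<theta> - z" z] assms by simp
  also have "g (\<theta> - z) = g (z - \<theta>)" using symm[of "z - \<theta>"] by simp
  finally show ?thesis .
qed

definition psi where "psi \<theta> x = cdf g (x - \<theta>) - S x"

lemma psi_cont: "isCont (psi \<theta>) x"
  unfolding psi_def by (intro continuous_intros G_comp_isCont G_isCont)

lemma psi_neg: "0 \<le> \<theta> \<Longrightarrow> x \<le> \<theta> \<Longrightarrow> psi \<theta> x < 0"
  using G_mono[of "x - \<theta>" 0] G_half S_gt[of x] unfolding psi_def by simp

lemma psi_strict: assumes "0 \<le> \<theta>" "\<theta> \<le> x" "x < y" shows "psi \<theta> x < psi \<theta> y"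
proof (rule DERIV_pos_imp_increasing[OF assms(3)])
  fix z assume z: "x \<le> z" "z \<le> y"
  have d0: "((\<lambda>x. cdf g (x - \<theta>) - (1/2 + (1-\<alpha>)/2 * cdf g x)) has_real_derivative (g (z-\<theta>) - (0 + (1-\<alpha>)/2 * g z))) (at z)"
    by (intro DERIV_diff DERIV_add DERIV_const DERIV_cmult G_deriv_shift G_deriv)
  have d: "(psi \<theta> has_real_derivative (g (z - \<theta>) - (1 - \<alpha>) / 2 * g z)) (at z)"
    using d0 unfolding psi_def[abs_def] by simp
  have "(1 - \<alpha>) / 2 * g z < 1 * g z" using pos[of z] alpha by (intro mult_strict_right_mono) auto
  also have "\<dots> \<le> g (z - \<theta>)" using g_shift_ge[of \<theta> z] assms z by simp
  finally show "\<exists>d. (psi \<theta> has_real_derivative d) (at z) \<and> 0 < d" using d by (intro exI[of _ "g (z - \<theta>) - (1 - \<alpha>) / 2 * g z"]) auto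
qed

lemma psi_mono: "0 \<le> \<theta> \<Longrightarrow> \<theta> \<le> x \<Longrightarrow> x \<le> y \<Longrightarrow> psi \<theta> x \<le> psi \<theta> y"
  using psi_strict[of \<theta> x y] by (cases "x = y") auto

lemma A_char: "0 \<le> \<theta> \<Longrightarrow> lo g \<alpha> x \<le> \<theta> \<longleftrightarrow> x \<le> D0 \<or> psi \<theta> x \<le> 0"
  using L2[of x \<theta>] lo_le[of x] unfolding psi_def by (cases "x \<le> D0") auto

lemma psi_D0: "0 \<le> \<theta> \<Longrightarrow> psi \<theta> D0 \<le> 0"
  using G_mono[of "D0 - \<theta>" D0] S_D0 unfolding psi_def by simp

lemma psi_top: "(psi \<theta> \<longlongrightarrow> \<alpha> / 2) at_top"
proof -
  have lim: "((\<lambda>x. cdf g (x - \<theta>) - (1/2 + (1 - \<alpha>) / 2 * cdf g x)) \<longlongrightarrow> 1 - (1/2 + (1 - \<alpha>) / 2 * 1)) at_top"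
    using G_shift_top[of "-\<theta>"] by (intro tendsto_intros G_top) simp_all
  have eq: "1 - (1/2 + (1 - \<alpha>) / 2 * 1) = \<alpha> / 2" by (simp add: field_simps)
  show ?thesis unfolding psi_def[abs_def] by (rule tendsto_eq_rhs[OF lim eq])
qed

lemma lo_set: assumes th: "0 \<le> \<theta>"
  shows "\<And>x. lo g \<alpha> x \<le> \<theta> \<longleftrightarrow> x \<le> lo_inv g \<alpha> \<theta>"
    and "psi \<theta> (lo_inv g \<alpha> \<theta>) = 0"
proof -
  define A where "A = {x. \<theta> \<ge> lo g \<alpha> x}"
  have r_def: "lo_inv g \<alpha> \<theta> = Sup A" by (simp add: lo_inv_def A_def)
  have D0A: "D0 \<in> A" using lo_le[of D0] th by (simp add: A_def)
  have "eventually (\<lambda>x. 0 < psi \<theta> x) at_top"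
    using psi_top[of \<theta>] by (rule order_tendstoD(1)) (use alpha in simp)
  then obtain b0 where b0: "\<And>x. b0 \<le> x \<Longrightarrow> 0 < psi \<theta> x" by (auto simp: eventually_at_top_linorder)
  define b where "b = max b0 (max D0 \<theta>) + 1"
  have bdd: "bdd_above A"
  proof (rule bdd_aboveI)
    fix x assume "x \<in> A"
    then have x: "x \<le> D0 \<or> psi \<theta> x \<le> 0" using A_char th by (simp add: A_def)
    show "x \<le> b"
    proof (rule ccontr)
      assume "\<not> x \<le> b"
      then have "b0 \<le> x" "\<not> x \<le> D0" by (auto simp: b_def)
      then show False using x b0[of x] by auto
    qed
  qed
  have cl: "closed A"
  proof -
    have "A = {..D0} \<union> {x. psi \<theta> x \<le> 0}" using A_char th by (auto simp: A_def)
    moreover have "closed {x. psi \<theta> x \<le> 0}"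
      using psi_cont by (intro closed_Collect_le continuous_at_imp_continuous_on) auto
    ultimately show ?thesis by auto
  qed
  have rA: "Sup A \<in> A" using closed_contains_Sup[OF _ bdd cl] D0A by auto
  have D0r: "D0 \<le> Sup A" using cSup_upper[OF D0A bdd] .
  have down: "y \<in> A" if "y \<le> x" "x \<in> A" for x y
  proof (cases "y \<le> D0")
    case True then show ?thesis using A_char th by (simp add: A_def)
  next
    case False
    then have "psi \<theta> x \<le> 0" using that A_char th by (auto simp: A_def)
    moreover have "psi \<theta> y \<le> psi \<theta> x \<or> psi \<theta> y < 0"
      using psi_mono[OF th, of y x] psi_neg[OF th, of y] that by (cases "\<theta> \<le> y") auto
    ultimately show ?thesis using A_char th by (auto simp: A_def)
  qed
  show "lo g \<alpha> x \<le> \<theta> \<longleftrightarrow> x \<le> lo_inv g \<alpha> \<theta>" for x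
    using cSup_upper[OF _ bdd, of x] down[OF _ rA, of x] by (auto simp: A_def r_def)
  have le: "psi \<theta> (Sup A) \<le> 0"
  proof (cases "Sup A = D0")
    case True then show ?thesis using psi_D0 th by simp
  next
    case False then show ?thesis using rA A_char th D0r by (auto simp: A_def)
  qed
  have ge: "\<not> psi \<theta> (Sup A) < 0"
  proof
    assume "psi \<theta> (Sup A) < 0"
    then obtain y where y: "y > Sup A" "psi \<theta> y < 0" using cont_lt_right[OF psi_cont] by blast
    then have "y \<in> A" using A_char th by (auto simp: A_def)
    then show False using cSup_upper[OF _ bdd, of y] y by simp
  qed
  show "psi \<theta> (lo_inv g \<alpha> \<theta>) = 0" using le ge r_def by simp
qed

lemma A_z: "0 \<le> \<theta> \<Longrightarrow> z \<le> xx1 g \<alpha> \<theta> \<longleftrightarrow> z + \<theta> \<le> D0 \<or> cdf g z \<le> S (z + \<theta>)"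
  using lo_set(1)[of \<theta> "z + \<theta>"] A_char[of \<theta> "z + \<theta>"] unfolding xx1_def psi_def by auto

lemma X1_eq: "0 \<le> \<theta> \<Longrightarrow> cdf g (xx1 g \<alpha> \<theta>) = S (xx1 g \<alpha> \<theta> + \<theta>)"
  using lo_set(2)[of \<theta>] unfolding xx1_def psi_def by simp

lemma X1_ii: "0 \<le> \<theta> \<Longrightarrow> 2 * cdf g (xx1 g \<alpha> \<theta>) - 1 = (1 - \<alpha>) * cdf g (xx1 g \<alpha> \<theta> + \<theta>)"
  using X1_eq[of \<theta>] by (simp add: field_simps)

lemma X1_ge_D0: "0 \<le> \<theta> \<Longrightarrow> D0 \<le> xx1 g \<alpha> \<theta>"
  using A_z[of \<theta> D0] S_D0 S_mono[of D0 "D0 + \<theta>"] by simp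

lemma X1_mono: assumes "0 \<le> s" "s \<le> t" shows "xx1 g \<alpha> s \<le> xx1 g \<alpha> t"
proof -
  have "cdf g (xx1 g \<alpha> s) \<le> S (xx1 g \<alpha> s + t)"
    using X1_eq[OF assms(1)] S_mono[of "xx1 g \<alpha> s + s" "xx1 g \<alpha> s + t"] assms by simp
  then show ?thesis using A_z[of t "xx1 g \<alpha> s"] assms by simp
qed

lemma X1_top: "(xx1 g \<alpha> \<longlongrightarrow> D1) at_top"
proof (rule order_tendstoI)
  fix a' assume a': "a' < D1"
  define z where "z = (a' + D1) / 2"
  have z: "a' < z" "z < D1" using a' by (auto simp: z_def)
  have "((\<lambda>\<theta>. S (z + \<theta>)) \<longlongrightarrow> 1/2 + (1 - \<alpha>) / 2 * 1) at_top"
    using G_shift_top[of z] by (intro tendsto_intros) (simp add: add.commute)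
  moreover have "cdf g z < 1/2 + (1 - \<alpha>) / 2 * 1" using GD1 G_strict[OF z(2)] by (simp add: field_simps)
  ultimately have "eventually (\<lambda>\<theta>. cdf g z < S (z + \<theta>)) at_top" by (rule order_tendstoD(1))
  moreover have "eventually (\<lambda>\<theta>::real. 0 \<le> \<theta>) at_top" by (rule eventually_ge_at_top)
  ultimately show "eventually (\<lambda>\<theta>. a' < xx1 g \<alpha> \<theta>) at_top"
  proof eventually_elim
    case (elim \<theta>)
    then have "z \<le> xx1 g \<alpha> \<theta>" using A_z[of \<theta> z] by simp
    then show ?case using z by simp
  qed
next
  fix b' assume b': "D1 < b'"
  have "eventually (\<lambda>\<theta>::real. 0 \<le> \<theta>) at_top" by (rule eventually_ge_at_top)
  then show "eventually (\<lambda>\<theta>. xx1 g \<alpha> \<theta> < b') at_top"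
  proof eventually_elim
    case (elim \<theta>)
    show ?case
    proof (rule ccontr)
      assume "\<not> xx1 g \<alpha> \<theta> < b'"
      then have "cdf g b' \<le> cdf g (xx1 g \<alpha> \<theta>)" by (simp add: G_le_iff)
      moreover have "cdf g D1 < cdf g b'" using G_strict[OF b'] .
      ultimately show False using X1_eq[OF elim] S_lt[of "xx1 g \<alpha> \<theta> + \<theta>"] GD1 by simp
    qed
  qed
qed

lemma X1_zero: "(xx1 g \<alpha> \<longlongrightarrow> D0) (at_right 0)"
proof (rule order_tendstoI)
  fix a' assume a': "a' < D0"
  have "eventually (\<lambda>\<theta>::real. 0 < \<theta>) (at_right 0)" by (simp add: eventually_at_right_less)
  then show "eventually (\<lambda>\<theta>. a' < xx1 g \<alpha> \<theta>) (at_right 0)"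
  proof eventually_elim
    case (elim \<theta>) then show ?case using X1_ge_D0[of \<theta>] a' by simp
  qed
next
  fix b' assume b': "D0 < b'"
  define z where "z = (D0 + b') / 2"
  have z: "D0 < z" "z < b'" using b' by (auto simp: z_def)
  have "isCont (\<lambda>\<theta>. S (z + \<theta>)) 0" by (intro continuous_intros G_comp_isCont)
  then have "((\<lambda>\<theta>. S (z + \<theta>)) \<longlongrightarrow> S z) (at 0)" unfolding isCont_def by simp
  then have lim: "((\<lambda>\<theta>. S (z + \<theta>)) \<longlongrightarrow> S z) (at_right 0)" by (rule tendsto_within_subset) simp
  have "S z < cdf g z"
  proof -
    have "1 / (1 + \<alpha>) < cdf g z" using GD0 G_strict[OF z(1)] by simp
    then have "1 < (1 + \<alpha>) * cdf g z" using alpha by (simp add: field_simps)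
    then show ?thesis by (simp add: field_simps)
  qed
  with lim have "eventually (\<lambda>\<theta>. S (z + \<theta>) < cdf g z) (at_right 0)" by (rule order_tendstoD(2))
  moreover have "eventually (\<lambda>\<theta>::real. 0 < \<theta>) (at_right 0)" by (simp add: eventually_at_right_less)
  ultimately show "eventually (\<lambda>\<theta>. xx1 g \<alpha> \<theta> < b') (at_right 0)"
  proof eventually_elim
    case (elim \<theta>)
    then have "\<not> z \<le> xx1 g \<alpha> \<theta>" using A_z[of \<theta> z] z by simp
    then show ?case using z by simp
  qed
qed

end

locale L1 = L0 +
  fixes a :: real
  assumes a_lim: "(up g \<alpha> \<longlongrightarrow> a) at_bot"
begin

lemma a_le_up: "a \<le> up g \<alpha> x"
proof (rule tendsto_upperbound[OF a_lim])
  show "eventually (\<lambda>y. up g \<alpha> y \<le> up g \<alpha> x) at_bot"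
    unfolding eventually_at_bot_linorder by (intro exI[of _ x]) (auto intro: up_mono)
qed simp

lemma a_nonneg: "0 \<le> a"
proof (rule tendsto_lowerbound[OF a_lim])
  show "eventually (\<lambda>y. 0 \<le> up g \<alpha> y) at_bot" by (intro always_eventually allI) (simp add: up_pos less_imp_le)
qed simp

abbreviation c where "c \<theta> \<equiv> up_inv g \<alpha> \<theta>"

lemma B_char: "\<theta> \<le> up g \<alpha> x \<longleftrightarrow>
   (x \<le> D0 \<and> \<alpha> * cdf g x \<le> cdf g (x - \<theta>)) \<or> (D0 \<le> x \<and> cdf g (\<theta> - x) \<le> S x)"
  using U1[of x \<theta>] U2[of x \<theta>] by (cases "x \<le> D0") auto

lemma B_set: assumes th: "a < \<theta>"
  shows "\<And>x. \<theta> \<le> up g \<alpha> x \<longleftrightarrow> c \<theta> \<le> x"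
proof -
  define B where "B = {x. \<theta> \<le> up g \<alpha> x}"
  have cdef: "c \<theta> = Inf B" by (simp add: up_inv_def B_def)
  have "eventually (\<lambda>y. up g \<alpha> y < \<theta>) at_bot" using a_lim th by (rule order_tendstoD(2))
  then obtain x0 where x0: "\<And>y. y \<le> x0 \<Longrightarrow> up g \<alpha> y < \<theta>" by (auto simp: eventually_at_bot_linorder)
  have bdd: "bdd_below B"
  proof (rule bdd_belowI)
    fix x assume "x \<in> B" then show "x0 \<le> x" using x0[of x] by (force simp: B_def)
  qed
  have "max \<theta> D0 + 1 \<le> up g \<alpha> (max \<theta> D0 + 1)" by (rule up_ge_x) simp
  then have ne: "max \<theta> D0 + 1 \<in> B" by (simp add: B_def)
  have cl: "closed B"
  proof -
    have "B = {x. x \<le> D0 \<and> \<alpha> * cdf g x \<le> cdf g (x - \<theta>)} \<union> {x. D0 \<le> x \<and> cdf g (\<theta> - x) \<le> S x}"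
      using B_char by (auto simp: B_def)
    moreover have "closed {x. x \<le> D0 \<and> \<alpha> * cdf g x \<le> cdf g (x - \<theta>)}"
    proof -
      have "{x. x \<le> D0 \<and> \<alpha> * cdf g x \<le> cdf g (x - \<theta>)} = {..D0} \<inter> {x. \<alpha> * cdf g x \<le> cdf g (x - \<theta>)}" by auto
      moreover have "closed {x. \<alpha> * cdf g x \<le> cdf g (x - \<theta>)}"
        by (intro closed_Collect_le continuous_at_imp_continuous_on ballI continuous_intros G_comp_isCont G_isCont)
      ultimately show ?thesis by auto
    qed
    moreover have "closed {x. D0 \<le> x \<and> cdf g (\<theta> - x) \<le> S x}"
    proof -
      have "{x. D0 \<le> x \<and> cdf g (\<theta> - x) \<le> S x} = {D0..} \<inter> {x. cdf g (\<theta> - x) \<le> S x}" by auto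
      moreover have "closed {x. cdf g (\<theta> - x) \<le> S x}"
        by (intro closed_Collect_le continuous_at_imp_continuous_on ballI continuous_intros G_comp_isCont G_isCont)
      ultimately show ?thesis by auto
    qed
    ultimately show ?thesis by auto
  qed
  have cB: "Inf B \<in> B" using closed_contains_Inf[OF _ bdd cl] ne by auto
  show "\<theta> \<le> up g \<alpha> x \<longleftrightarrow> c \<theta> \<le> x" for x
  proof
    assume "\<theta> \<le> up g \<alpha> x" then show "c \<theta> \<le> x" using cInf_lower[OF _ bdd, of x] cdef by (simp add: B_def)
  next
    assume "c \<theta> \<le> x" then show "\<theta> \<le> up g \<alpha> x" using cB up_mono[of "Inf B" x] cdef by (simp add: B_def)
  qed
qed

lemma c_mem: "a < \<theta> \<Longrightarrow> \<theta> \<le> up g \<alpha> (c \<theta>)"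
  using B_set by simp

lemma F2D0: "a < 2 * D0" "c (2 * D0) = D0"
proof -
  define F where "F x = \<alpha> * cdf g x - cdf g (x - 2 * D0)" for x
  have dF: "(F has_real_derivative (\<alpha> * g D0 - g (D0 - 2 * D0))) (at D0)"
    unfolding F_def by (intro DERIV_diff DERIV_cmult G_deriv G_deriv_shift)
  have neg: "\<alpha> * g D0 - g (D0 - 2 * D0) < 0"
    using symm[of D0] pos[of D0] alpha by simp
  obtain d where d: "d > 0" "\<And>h. h > 0 \<Longrightarrow> h < d \<Longrightarrow> F D0 < F (D0 - h)"
    using DERIV_neg_dec_left[OF dF neg] by auto
  have F0: "F D0 = 0" unfolding F_def using GD0 GmD0 by simp
  have notB: "up g \<alpha> (D0 - h) < 2 * D0" if "h > 0" "h < d" for h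
  proof -
    have "0 < F (D0 - h)" using d(2)[OF that] F0 by simp
    then show ?thesis using U1[of "D0 - h" "2 * D0"] that by (simp add: F_def)
  qed
  show a2: "a < 2 * D0" using a_le_up[of "D0 - d/2"] notB[of "d/2"] d by simp
  have le: "c (2 * D0) \<le> D0" using B_set[OF a2, of D0] up_D0 by simp
  show "c (2 * D0) = D0"
  proof (rule ccontr)
    assume "c (2 * D0) \<noteq> D0"
    then have lt: "c (2 * D0) < D0" using le by simp
    define h where "h = min (d/2) ((D0 - c (2 * D0)) / 2)"
    have h1: "h \<le> (D0 - c (2 * D0)) / 2" "h \<le> d/2" unfolding h_def by (rule min.cobounded2, rule min.cobounded1)
    have h: "h > 0" "h < d" "c (2 * D0) \<le> D0 - h" using lt d h1 by (auto simp: h_def)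
    then show False using B_set[OF a2, of "D0 - h"] notB[OF h(1,2)] by simp
  qed
qed

lemma c_ge_D0: assumes "2 * D0 \<le> \<theta>" shows "D0 \<le> c \<theta>"
proof (cases "\<theta> = 2 * D0")
  case True then show ?thesis using F2D0 by simp
next
  case False
  then have th: "2 * D0 < \<theta>" using assms by simp
  then have at: "a < \<theta>" using F2D0 by simp
  show ?thesis
  proof (rule ccontr)
    assume "\<not> D0 \<le> c \<theta>"
    then have "up g \<alpha> (c \<theta>) \<le> 2 * D0" using up_mono[of "c \<theta>" D0] up_D0 by simp
    then show False using c_mem[OF at] th by simp
  qed
qed

lemma X0_i: assumes "a < \<theta>" "\<theta> \<le> 2 * D0"
  shows "cdf g (xx0 g \<alpha> \<theta>) = \<alpha> * cdf g (xx0 g \<alpha> \<theta> + \<theta>)"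
proof -
  have cD0: "c \<theta> \<le> D0" using B_set[OF assms(1), of D0] up_D0 assms(2) by simp
  have le: "\<alpha> * cdf g (c \<theta>) \<le> cdf g (c \<theta> - \<theta>)" using U1[OF cD0] c_mem[OF assms(1)] by simp
  have "\<not> \<alpha> * cdf g (c \<theta>) - cdf g (c \<theta> - \<theta>) < 0"
  proof
    assume "\<alpha> * cdf g (c \<theta>) - cdf g (c \<theta> - \<theta>) < 0"
    moreover have "isCont (\<lambda>x. \<alpha> * cdf g x - cdf g (x - \<theta>)) (c \<theta>)"
      by (intro continuous_intros G_comp_isCont G_isCont)
    ultimately obtain y where y: "y < c \<theta>" "\<alpha> * cdf g y - cdf g (y - \<theta>) < 0"
      using cont_lt_left by blast
    then have "\<theta> \<le> up g \<alpha> y" using U1[of y \<theta>] cD0 by simp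
    then show False using B_set[OF assms(1), of y] y by simp
  qed
  then show ?thesis using le by (simp add: xx0_def)
qed

lemma X2_iii: assumes "2 * D0 \<le> \<theta>"
  shows "1 - 2 * cdf g (xx2 g \<alpha> \<theta>) = (1 - \<alpha>) * cdf g (xx2 g \<alpha> \<theta> + \<theta>)"
proof -
  have at: "a < \<theta>" using assms F2D0 by simp
  have cD0: "D0 \<le> c \<theta>" using c_ge_D0[OF assms] .
  have le: "cdf g (\<theta> - c \<theta>) \<le> S (c \<theta>)" using U2[OF cD0] c_mem[OF at] by simp
  have "\<not> cdf g (\<theta> - c \<theta>) - S (c \<theta>) < 0"
  proof
    assume lt: "cdf g (\<theta> - c \<theta>) - S (c \<theta>) < 0"
    have cgt: "D0 < c \<theta>"
    proof (rule ccontr)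
      assume "\<not> D0 < c \<theta>" then have "c \<theta> = D0" using cD0 by simp
      then have "cdf g (\<theta> - D0) < cdf g D0" using lt S_D0 by simp
      then show False using assms by (simp add: G_less_iff)
    qed
    have "isCont (\<lambda>x. cdf g (\<theta> - x) - S x) (c \<theta>)"
      by (intro continuous_intros G_comp_isCont G_isCont)
    from cont_nbhd_lt[OF this lt] obtain d where d: "d > 0" "\<And>y. \<bar>y - c \<theta>\<bar> < d \<Longrightarrow> cdf g (\<theta> - y) - S y < 0" by auto
    define y where "y = max (c \<theta> - d/2) D0"
    have y: "D0 \<le> y" "y < c \<theta>" "\<bar>y - c \<theta>\<bar> < d" using cgt d by (auto simp: y_def)
    then have "\<theta> \<le> up g \<alpha> y" using U2[OF y(1)] d(2)[OF y(3)] by simp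
    then show False using B_set[OF at, of y] y by simp
  qed
  then have eq: "cdf g (\<theta> - c \<theta>) = S (c \<theta>)" using le by simp
  have "cdf g (\<theta> - c \<theta>) = 1 - cdf g (c \<theta> - \<theta>)" using G_sym[of "c \<theta> - \<theta>"] by simp
  then show ?thesis using eq by (simp add: xx2_def field_simps)
qed

lemma X0_mono: assumes "a < s" "s \<le> t" "t \<le> 2 * D0" shows "xx0 g \<alpha> s \<le> xx0 g \<alpha> t"
proof -
  have at: "a < t" using assms by simp
  have ct: "c t \<le> D0" using B_set[OF at, of D0] up_D0 assms(3) by simp
  have mem: "\<alpha> * cdf g (c t) \<le> cdf g (c t - t)" using U1[OF ct] c_mem[OF at] by simp
  define z where "z = c t - t"
  have "\<alpha> * cdf g (z + s) \<le> \<alpha> * cdf g (c t)" using assms alpha by (intro mult_left_mono G_mono) (auto simp: z_def)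
  also have "\<dots> \<le> cdf g (z + s - s)" using mem by (simp add: z_def)
  finally have "s \<le> up g \<alpha> (z + s)" using U1[of "z + s" s] ct assms by (simp add: z_def)
  then have "c s \<le> z + s" using B_set[OF assms(1)] by simp
  then show ?thesis by (simp add: xx0_def z_def)
qed

lemma X2_mono: assumes "2 * D0 \<le> s" "s \<le> t" shows "xx2 g \<alpha> t \<le> xx2 g \<alpha> s"
proof -
  have as: "a < s" using assms F2D0 by simp
  have at: "a < t" using as assms by simp
  have cs: "D0 \<le> c s" using c_ge_D0[OF assms(1)] .
  have mem: "cdf g (s - c s) \<le> S (c s)" using U2[OF cs] c_mem[OF as] by simp
  define w where "w = c s + (t - s)"
  have w: "D0 \<le> w" "c s \<le> w" using cs assms by (auto simp: w_def)
  have "cdf g (t - w) \<le> S w" using mem S_mono[OF w(2)] by (simp add: w_def)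
  then have "t \<le> up g \<alpha> w" using U2[OF w(1)] by simp
  then have "c t \<le> w" using B_set[OF at] by simp
  then show ?thesis by (simp add: xx2_def w_def)
qed

lemma up_0: "up g \<alpha> 0 = D1"
proof -
  have "\<alpha> * cdf g 0 = cdf g (- D1)" by (simp only: G_half GmD1)
  then show ?thesis using up_le[of 0] D0_pos qf_G by simp
qed

lemma X0_D1: assumes aD1: "a < D1" shows "xx0 g \<alpha> D1 = - D1"
proof -
  have D1pos: "0 \<le> D1" using D0_pos D0_less_D1 by simp
  have c0: "c D1 \<le> 0" using B_set[OF aD1, of 0] up_0 by simp
  have "c D1 = 0"
  proof (rule ccontr)
    assume "c D1 \<noteq> 0"
    then have cn: "c D1 < 0" using c0 by simp
    define F where "F x = \<alpha> * cdf g x - cdf g (x - D1)" for x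
    have dF: "(F has_real_derivative (\<alpha> * g x - g (x - D1))) (at x)" for x
      unfolding F_def by (intro DERIV_diff DERIV_cmult G_deriv G_deriv_shift)
    have Fle: "F x \<le> 0" if "c D1 \<le> x" "x \<le> 0" for x
    proof -
      have "D1 \<le> up g \<alpha> x" using B_set[OF aD1, of x] that by simp
      then show ?thesis using U1[of x D1] that D0_pos by (simp add: F_def)
    qed
    have Fge: "0 \<le> F x" if "x \<le> 0" for x
    proof -
      have "cdf g (x - D1) * cdf g 0 \<le> cdf g (0 - D1) * cdf g x" by (rule LC2[OF D1pos that])
      then show ?thesis using G_half GmD1 by (simp add: F_def)
    qed
    define y0 where "y0 = c D1 / 2"
    have "\<alpha> * g y0 - g (y0 - D1) = 0"
    proof (rule DERIV_local_const[OF dF, of "- c D1 / 2"])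
      show "0 < - c D1 / 2" using cn by simp
      show "\<forall>y. \<bar>y0 - y\<bar> < - c D1 / 2 \<longrightarrow> F y0 = F y"
      proof (intro allI impI)
        fix y assume "\<bar>y0 - y\<bar> < - c D1 / 2"
        then have y: "c D1 \<le> y" "y \<le> 0" using cn by (auto simp: y0_def abs_less_iff)
        have "c D1 \<le> y0" "y0 \<le> 0" using cn by (auto simp: y0_def)
        then have "F y0 = 0" using Fle[of y0] Fge[of y0] by linarith
        moreover have "F y = 0" using Fle[of y] Fge[of y] y by linarith
        ultimately show "F y0 = F y" by simp
      qed
    qed
    then have gy0: "g (y0 - D1) = \<alpha> * g y0" by simp
    have "D1 \<le> up g \<alpha> z" if z: "z \<le> y0" for z
    proof -
      have "F z \<le> F y0"
      proof (rule DERIV_nonneg_imp_nondecreasing[OF z])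
        fix x assume x: "z \<le> x" "x \<le> y0"
        have "g (x - D1) * g y0 \<le> g (y0 - D1) * g x" by (rule LC1[OF D1pos x(2)])
        then have "g (x - D1) * g y0 \<le> (\<alpha> * g x) * g y0" using gy0 by (simp add: mult_ac)
        then have "g (x - D1) \<le> \<alpha> * g x" using pos[of y0] by simp
        then show "\<exists>d. (F has_real_derivative d) (at x) \<and> 0 \<le> d"
          using dF[of x] by (intro exI[of _ "\<alpha> * g x - g (x - D1)"]) simp
      qed
      also have "F y0 \<le> 0" using Fle[of y0] cn by (simp add: y0_def)
      finally have "\<alpha> * cdf g z \<le> cdf g (z - D1)" by (simp add: F_def)
      moreover have "z \<le> D0" using z cn D0_pos by (simp add: y0_def)
      ultimately show ?thesis using U1 by simp
    qed
    then have "D1 \<le> a"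
      by (intro tendsto_lowerbound[OF a_lim]) (auto simp: eventually_at_bot_linorder)
    then show False using aD1 by simp
  qed
  then show ?thesis by (simp add: xx0_def)
qed

lemma X2_eq': "2 * D0 \<le> \<theta> \<Longrightarrow> cdf g (xx2 g \<alpha> \<theta>) = (1 - (1 - \<alpha>) * cdf g (xx2 g \<alpha> \<theta> + \<theta>)) / 2"
  using X2_iii by (simp add: field_simps)

lemma X2_top: "(xx2 g \<alpha> \<longlongrightarrow> - D1) at_top"
proof (rule order_tendstoI)
  fix a' assume a': "a' < - D1"
  have "eventually (\<lambda>\<theta>::real. 2 * D0 \<le> \<theta>) at_top" by (rule eventually_ge_at_top)
  then show "eventually (\<lambda>\<theta>. a' < xx2 g \<alpha> \<theta>) at_top"
  proof eventually_elim
    case (elim \<theta>)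
    have "(1 - \<alpha>) * cdf g (xx2 g \<alpha> \<theta> + \<theta>) < (1 - \<alpha>) * 1"
      using alpha G_less1 by (intro mult_strict_left_mono) auto
    then have "cdf g (- D1) < cdf g (xx2 g \<alpha> \<theta>)" using X2_eq'[OF elim] GmD1 by (simp add: field_simps)
    then show ?case using a' by (simp add: G_less_iff)
  qed
next
  fix b' assume b': "- D1 < b'"
  define z where "z = (b' - D1) / 2"
  have z: "- D1 < z" "z < b'" using b' by (auto simp: z_def)
  have Gz: "\<alpha> / 2 < cdf g z" using G_strict[OF z(1)] GmD1 by simp
  have "((\<lambda>\<theta>. (1 - \<alpha>) * cdf g (z + \<theta>)) \<longlongrightarrow> (1 - \<alpha>) * 1) at_top"
    using G_shift_top[of z] by (intro tendsto_intros) (simp add: add.commute)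
  moreover have "1 - 2 * cdf g z < (1 - \<alpha>) * 1" using Gz by simp
  ultimately have "eventually (\<lambda>\<theta>. 1 - 2 * cdf g z < (1 - \<alpha>) * cdf g (z + \<theta>)) at_top"
    by (rule order_tendstoD(1))
  moreover have "eventually (\<lambda>\<theta>::real. 2 * D0 \<le> \<theta>) at_top" by (rule eventually_ge_at_top)
  ultimately show "eventually (\<lambda>\<theta>. xx2 g \<alpha> \<theta> < b') at_top"
  proof eventually_elim
    case (elim \<theta>)
    show ?case
    proof (rule ccontr)
      assume "\<not> xx2 g \<alpha> \<theta> < b'"
      then have zx: "z \<le> xx2 g \<alpha> \<theta>" using z by simp
      have "(1 - \<alpha>) * cdf g (z + \<theta>) \<le> (1 - \<alpha>) * cdf g (xx2 g \<alpha> \<theta> + \<theta>)"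
        using zx alpha by (intro mult_left_mono G_mono) auto
      also have "\<dots> = 1 - 2 * cdf g (xx2 g \<alpha> \<theta>)" using X2_iii[OF elim(2)] by simp
      also have "\<dots> \<le> 1 - 2 * cdf g z" using G_mono[OF zx] by simp
      finally show False using elim(1) by simp
    qed
  qed
qed

abbreviation MM where "MM \<theta> \<equiv> density lborel (\<lambda>x. ennreal (g (x - \<theta>)))"

lemma emeas_le: "emeasure (MM \<theta>) {..y} = ennreal (cdf g (y - \<theta>))"
proof -
  have "emeasure (MM \<theta>) {..y} = (\<integral>\<^sup>+x. ennreal (g (x - \<theta>)) * indicator {..y} x \<partial>lborel)"
    by (rule emeasure_density) auto
  also have "\<dots> = (\<integral>\<^sup>+x. ennreal (g (\<theta> + 1 * x - \<theta>)) * indicator {..y} (\<theta> + 1 * x) \<partial>lborel)"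
    using nn_integral_real_affine[of "\<lambda>x. ennreal (g (x - \<theta>)) * indicator {..y} x" 1 \<theta>] by simp
  also have "\<dots> = (\<integral>\<^sup>+x. ennreal (indicator {..y - \<theta>} x * g x) \<partial>lborel)"
    by (intro nn_integral_cong) (auto split: split_indicator)
  also have "\<dots> = ennreal (\<integral>x. indicator {..y - \<theta>} x * g x \<partial>lborel)"
    using integrable_mult_indicator[of "{..y-\<theta>}" lborel g] integ
    by (intro nn_integral_eq_integral) (auto simp: nonneg)
  also have "\<dots> = ennreal (cdf g (y - \<theta>))" by (simp add: cdf_def set_lebesgue_integral_def)
  finally show ?thesis .
qed

lemma emeas_lt: "emeasure (MM \<theta>) {..<y} = ennreal (cdf g (y - \<theta>))"
proof -
  have "emeasure (MM \<theta>) {..<y} = (\<integral>\<^sup>+x. ennreal (g (x - \<theta>)) * indicator {..<y} x \<partial>lborel)"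
    by (rule emeasure_density) auto
  also have "\<dots> = (\<integral>\<^sup>+x. ennreal (g (x - \<theta>)) * indicator {..y} x \<partial>lborel)"
    by (intro nn_integral_cong_AE eventually_mono[OF AE_lborel_singleton[of y]]) (auto split: split_indicator)
  also have "\<dots> = emeasure (MM \<theta>) {..y}"
    by (rule emeasure_density[symmetric]) auto
  finally show ?thesis using emeas_le by simp
qed

lemma meas_le: "measure (MM \<theta>) {..y} = cdf g (y - \<theta>)"
  using emeas_le G_nonneg by (simp add: measure_def)

lemma meas_lt: "measure (MM \<theta>) {..<y} = cdf g (y - \<theta>)"
  using emeas_lt G_nonneg by (simp add: measure_def)

lemma r_in_B: assumes "0 \<le> \<theta>" shows "\<theta> \<le> up g \<alpha> (lo_inv g \<alpha> \<theta>)"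
proof -
  let ?r = "lo_inv g \<alpha> \<theta>"
  have r: "?r = xx1 g \<alpha> \<theta> + \<theta>" by (simp add: xx1_def)
  have rD0: "D0 \<le> ?r" using X1_ge_D0[OF assms] r assms by simp
  have eq: "cdf g (?r - \<theta>) = S ?r" using X1_eq[OF assms] r by simp
  have "cdf g (\<theta> - ?r) = 1 - S ?r" using G_sym[of "?r - \<theta>"] eq by simp
  also have "\<dots> \<le> S ?r" using S_gt[of ?r] by simp
  finally show ?thesis using U2[OF rD0] by simp
qed

lemma cov1: assumes "0 \<le> \<theta>" "\<theta> \<le> a" shows "coverage g \<alpha> \<theta> = cdf g (xx1 g \<alpha> \<theta>)"
proof -
  have "{x. lo g \<alpha> x \<le> \<theta> \<and> \<theta> \<le> up g \<alpha> x} = {..lo_inv g \<alpha> \<theta>}"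
    using lo_set(1)[OF assms(1)] a_le_up assms(2) by (auto intro: order_trans)
  then show ?thesis unfolding coverage_def using meas_le by (simp add: xx1_def)
qed

lemma cov2: assumes "a < \<theta>" shows "coverage g \<alpha> \<theta> = cdf g (xx1 g \<alpha> \<theta>) - cdf g (xx0 g \<alpha> \<theta>)"
proof -
  have th: "0 \<le> \<theta>" using a_nonneg assms by simp
  let ?r = "lo_inv g \<alpha> \<theta>"
  have cr: "c \<theta> \<le> ?r" using B_set[OF assms] r_in_B[OF th] by simp
  have "{x. lo g \<alpha> x \<le> \<theta> \<and> \<theta> \<le> up g \<alpha> x} = {..?r} - {..<c \<theta>}"
    using lo_set(1)[OF th] B_set[OF assms] by auto
  moreover have "measure (MM \<theta>) ({..?r} - {..<c \<theta>}) = measure (MM \<theta>) {..?r} - measure (MM \<theta>) {..<c \<theta>}"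
    by (rule measure_Diff) (use cr emeas_le in auto)
  ultimately show ?thesis unfolding coverage_def using meas_le meas_lt by (simp add: xx1_def xx0_def)
qed

end

lemma pos_from:
  fixes g :: "real \<Rightarrow> real" and \<alpha> a :: real
  assumes nonneg: "\<And>x. 0 \<le> g x"
    and symm: "\<And>z. g (- z) = g z"
    and unimodal: "\<And>x y. 0 \<le> x \<Longrightarrow> x \<le> y \<Longrightarrow> g y \<le> g x"
    and a_lim: "(up g \<alpha> \<longlongrightarrow> a) at_bot"
  shows "0 < g x"
proof (rule ccontr)
  assume "\<not> 0 < g x"
  then have gx: "g x = 0" using nonneg[of x] by simp
  define M where "M = \<bar>x\<bar>"
  have gM: "g M = 0" using gx symm[of x] by (cases "0 \<le> x") (auto simp: M_def)
  have gt: "g t = 0" if "t \<le> - M" for t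
  proof -
    have "g (- t) \<le> g M" using unimodal[of M "- t"] that by (simp add: M_def)
    then show ?thesis using symm[of t] gM nonneg[of t] by simp
  qed
  have G0: "cdf g y = 0" if "y \<le> - M" for y
  proof -
    have "(\<lambda>t. indicator {..y} t *\<^sub>R g t) = (\<lambda>t. 0)"
      using gt that by (auto simp: fun_eq_iff split: split_indicator)
    then show ?thesis unfolding cdf_def set_lebesgue_integral_def by simp
  qed
  have upy: "up g \<alpha> y = y - qf g 0" if "y \<le> min (d0 g \<alpha>) (- M)" for y
    using that G0[of y] by (simp add: up_def)
  have "eventually (\<lambda>y. a - 1 < up g \<alpha> y) at_bot" using a_lim by (rule order_tendstoD(1)) simp
  then obtain N where N: "\<And>y. y \<le> N \<Longrightarrow> a - 1 < up g \<alpha> y" by (auto simp: eventually_at_bot_linorder)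
  define y where "y = min (min N (min (d0 g \<alpha>) (- M))) (a - 2 + qf g 0)"
  have "y \<le> N" "y \<le> min (d0 g \<alpha>) (- M)" "y \<le> a - 2 + qf g 0" by (auto simp: y_def)
  then show False using N[of y] upy[of y] by simp
qed

theorem lemma5:
  fixes g :: "real \<Rightarrow> real" and \<alpha> a :: real
  assumes meas: "g \<in> borel_measurable borel"
    and nonneg: "\<And>x. 0 \<le> g x"
    and integ: "integrable lborel g"
    and total: "(LINT x|lborel. g x) = 1"
    and symm: "\<And>z. g (- z) = g z"
    and unimodal: "\<And>x y. 0 \<le> x \<Longrightarrow> x \<le> y \<Longrightarrow> g y \<le> g x"
    and logconc: "\<And>x y t. 0 < g x \<Longrightarrow> 0 < g y \<Longrightarrow> 0 \<le> t \<Longrightarrow> t \<le> 1 \<Longrightarrow>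
                    t * ln (g x) + (1 - t) * ln (g y) \<le> ln (g (t * x + (1 - t) * y))"
    and alpha: "0 < \<alpha>" "\<alpha> < 1"
    and a_lim: "(up g \<alpha> \<longlongrightarrow> a) at_bot"
  shows
   "(\<forall>\<theta>. 0 \<le> \<theta> \<and> \<theta> \<le> a \<longrightarrow> coverage g \<alpha> \<theta> = cdf g (xx1 g \<alpha> \<theta>)) \<and>
    (\<forall>\<theta>. a < \<theta> \<and> \<theta> \<le> 2 * d0 g \<alpha> \<longrightarrow>
        coverage g \<alpha> \<theta> = cdf g (xx1 g \<alpha> \<theta>) - cdf g (xx0 g \<alpha> \<theta>)) \<and>
    (\<forall>\<theta>. 2 * d0 g \<alpha> < \<theta> \<longrightarrow>
        coverage g \<alpha> \<theta> = cdf g (xx1 g \<alpha> \<theta>) - cdf g (xx2 g \<alpha> \<theta>)) \<and>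
    (\<forall>\<theta>. a < \<theta> \<and> \<theta> \<le> 2 * d0 g \<alpha> \<longrightarrow>
        cdf g (xx0 g \<alpha> \<theta>) = \<alpha> * cdf g (xx0 g \<alpha> \<theta> + \<theta>)) \<and>
    (\<forall>\<theta>. 0 \<le> \<theta> \<longrightarrow>
        2 * cdf g (xx1 g \<alpha> \<theta>) - 1 = (1 - \<alpha>) * cdf g (xx1 g \<alpha> \<theta> + \<theta>)) \<and>
    (\<forall>\<theta>. 2 * d0 g \<alpha> \<le> \<theta> \<longrightarrow>
        1 - 2 * cdf g (xx2 g \<alpha> \<theta>) = (1 - \<alpha>) * cdf g (xx2 g \<alpha> \<theta> + \<theta>)) \<and>
    (\<forall>s t. a < s \<and> s \<le> t \<and> t \<le> 2 * d0 g \<alpha> \<longrightarrow> xx0 g \<alpha> s \<le> xx0 g \<alpha> t) \<and>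
    (\<forall>s t. 0 \<le> s \<and> s \<le> t \<longrightarrow> xx1 g \<alpha> s \<le> xx1 g \<alpha> t) \<and>
    (\<forall>s t. 2 * d0 g \<alpha> \<le> s \<and> s \<le> t \<longrightarrow> xx2 g \<alpha> t \<le> xx2 g \<alpha> s) \<and>
    xx0 g \<alpha> (2 * d0 g \<alpha>) = - d0 g \<alpha> \<and>
    xx2 g \<alpha> (2 * d0 g \<alpha>) = - d0 g \<alpha> \<and>
    (a < d1 g \<alpha> \<longrightarrow> xx0 g \<alpha> (d1 g \<alpha>) = - d1 g \<alpha>) \<and>
    (xx1 g \<alpha> \<longlongrightarrow> d0 g \<alpha>) (at_right 0) \<and>
    (xx1 g \<alpha> \<longlongrightarrow> d1 g \<alpha>) at_top \<and>
    (xx2 g \<alpha> \<longlongrightarrow> - d1 g \<alpha>) at_top"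
proof -
  have pos: "\<And>x. 0 < g x" using pos_from[OF nonneg symm unimodal a_lim] .
  interpret L1 g \<alpha> a
    using meas nonneg integ total symm unimodal logconc alpha pos a_lim by unfold_locales
  have x02: "xx2 g \<alpha> \<theta> = xx0 g \<alpha> \<theta>" for \<theta> by (simp add: xx0_def xx2_def)
  show ?thesis
  proof (intro conjI allI impI)
    fix \<theta> assume "0 \<le> \<theta> \<and> \<theta> \<le> a" then show "coverage g \<alpha> \<theta> = cdf g (xx1 g \<alpha> \<theta>)" using cov1 by simp
  next
    fix \<theta> assume "a < \<theta> \<and> \<theta> \<le> 2 * D0"
    then show "coverage g \<alpha> \<theta> = cdf g (xx1 g \<alpha> \<theta>) - cdf g (xx0 g \<alpha> \<theta>)" using cov2 by simp
  next
    fix \<theta> assume "2 * D0 < \<theta>"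
    then show "coverage g \<alpha> \<theta> = cdf g (xx1 g \<alpha> \<theta>) - cdf g (xx2 g \<alpha> \<theta>)" using cov2 F2D0(1) x02 by simp
  next
    fix \<theta> assume "a < \<theta> \<and> \<theta> \<le> 2 * D0"
    then show "cdf g (xx0 g \<alpha> \<theta>) = \<alpha> * cdf g (xx0 g \<alpha> \<theta> + \<theta>)" using X0_i by simp
  next
    fix \<theta> :: real assume "0 \<le> \<theta>"
    then show "2 * cdf g (xx1 g \<alpha> \<theta>) - 1 = (1 - \<alpha>) * cdf g (xx1 g \<alpha> \<theta> + \<theta>)" using X1_ii by simp
  next
    fix \<theta> assume "2 * D0 \<le> \<theta>"
    then show "1 - 2 * cdf g (xx2 g \<alpha> \<theta>) = (1 - \<alpha>) * cdf g (xx2 g \<alpha> \<theta> + \<theta>)" using X2_iii by simp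
  next
    fix s t assume "a < s \<and> s \<le> t \<and> t \<le> 2 * D0"
    then show "xx0 g \<alpha> s \<le> xx0 g \<alpha> t" using X0_mono by simp
  next
    fix s t :: real assume "0 \<le> s \<and> s \<le> t"
    then show "xx1 g \<alpha> s \<le> xx1 g \<alpha> t" using X1_mono by simp
  next
    fix s t assume "2 * D0 \<le> s \<and> s \<le> t"
    then show "xx2 g \<alpha> t \<le> xx2 g \<alpha> s" using X2_mono by simp
  next
    show "xx0 g \<alpha> (2 * D0) = - D0" using F2D0(2) by (simp add: xx0_def)
  next
    show "xx2 g \<alpha> (2 * D0) = - D0" using F2D0(2) by (simp add: xx2_def)
  next
    assume "a < D1" then show "xx0 g \<alpha> D1 = - D1" by (rule X0_D1)
  next
    show "(xx1 g \<alpha> \<longlongrightarrow> D0) (at_right 0)" by (rule X1_zero)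
  next
    show "(xx1 g \<alpha> \<longlongrightarrow> D1) at_top" by (rule X1_top)
  next
    show "(xx2 g \<alpha> \<longlongrightarrow> - D1) at_top" by (rule X2_top)
  qed
qed

end
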